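(* Let $p$ be an odd prime. If $g\in G$ is a non-identity element of finite order, then $g$ has fewer than $p$ fixed points on $M(\mathbb{F}_p)$.
   Context: $M(\mathbb{F}_p)$ denotes the set of triples $(x,y,z)\in\mathbb{F}_p^3\setminus\{(0,0,0)\}$ satisfying $x^2+y^2+z^2=xyz$. The Markoff moves are the maps $m_1(x,y,z)=(yz-x,y,z)$, $m_2(x,y,z)=(x,xz-y,z)$, $m_3(x,y,z)=(x,y,xy-z)$ on $M(\mathbb{F}_p)$. Let $G=\mathbb{Z}/2*\mathbb{Z}/2*\mathbb{Z}/2$ be the free product with generators $m_1,m_2,m_3$; it acts on $M(\mathbb{F}_p)$ with $m_i$ acting by the $i$-th Markoff move. *)

theory Defs
  imports "HOL-Algebra.Group" "HOL-Computational_Algebra.Primes"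
begin

text \<open>Elements of G are reduced words in the letters 1, 2, 3 (standing for m1, m2, m3):
  lists over {1,2,3} with no two adjacent letters equal.\<close>

definition reduced_word :: "nat list \<Rightarrow> bool" where
  "reduced_word w \<longleftrightarrow> set w \<subseteq> {1,2,3} \<and> successively (\<noteq>) w"

fun push_letter :: "nat \<Rightarrow> nat list \<Rightarrow> nat list" where
  "push_letter a [] = [a]"
| "push_letter a (b # bs) = (if a = b then bs else a # b # bs)"

definition reduce_word :: "nat list \<Rightarrow> nat list" where
  "reduce_word xs = foldr push_letter xs []"

definition markoff_group :: "nat list monoid" where
  "markoff_group = \<lparr> carrier = {w. reduced_word w},
                     monoid.mult = (\<lambda>v w. reduce_word (v @ w)),
                     monoid.one = [] \<rparr>"

text \<open>F_p is represented by the residues {0..<p} of int, arithmetic taken mod p.\<close>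

definition markoff_set :: "int \<Rightarrow> (int \<times> int \<times> int) set" where
  "markoff_set p = {(x, y, z). x \<in> {0..<p} \<and> y \<in> {0..<p} \<and> z \<in> {0..<p}
      \<and> (x, y, z) \<noteq> (0, 0, 0)
      \<and> (x^2 + y^2 + z^2) mod p = (x * y * z) mod p}"

definition markoff_move :: "int \<Rightarrow> nat \<Rightarrow> int \<times> int \<times> int \<Rightarrow> int \<times> int \<times> int" where
  "markoff_move p i = (\<lambda>(x, y, z).
      if i = 1 then ((y * z - x) mod p, y, z)
      else if i = 2 then (x, (x * z - y) mod p, z)
      else if i = 3 then (x, y, (x * y - z) mod p)
      else (x, y, z))"

definition markoff_act :: "int \<Rightarrow> nat list \<Rightarrow> int \<times> int \<times> int \<Rightarrow> int \<times> int \<times> int" where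
  "markoff_act p w = foldr (\<lambda>i f. markoff_move p i \<circ> f) w id"

end

theory Submission
  imports Defs "HOL-Number_Theory.Cong"
begin


lemma p_not_dvd_2: assumes "prime (p::int)" "odd p" shows "\<not> p dvd 2"
proof
  assume "p dvd 2"
  hence "p \<le> 2" by (simp add: zdvd_imp_le)
  moreover have "p \<ge> 2" using prime_ge_2_int assms(1) by blast
  ultimately have "p = 2" by simp
  thus False using assms(2) by simp
qed

lemma p_not_dvd_4: assumes "prime (p::int)" "odd p" shows "\<not> p dvd 4"
proof
  assume "p dvd 4"
  hence "p dvd 2 * 2" by simp
  thus False using prime_dvd_mult_iff[OF assms(1)] p_not_dvd_2[OF assms] by blast
qed

lemma core0:
  fixes p a u v :: int
  assumes pr: "prime p" and od: "odd p"
    and E': "p dvd 4*u^2+4*v^2-u^2*v^2" and H1': "p dvd u*v - 2*a"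
    and nz: "\<not>(p dvd a \<and> p dvd u \<and> p dvd v)"
  shows "\<not> p dvd u"
proof
  have n2: "\<not> p dvd 2" and n4: "\<not> p dvd 4" using p_not_dvd_2 p_not_dvd_4 pr od by auto
  assume "p dvd u"
  have "4*u^2+4*v^2-u^2*v^2 = 4*(v*v) + u*(4*u - u*v^2)" by (simp add: algebra_simps power2_eq_square)
  hence "p dvd 4*(v*v) + u*(4*u - u*v^2)" using E' by simp
  hence "p dvd 4*(v*v)" using \<open>p dvd u\<close> by (metis dvd_add_left_iff dvd_mult2)
  hence pv: "p dvd v" using n4 prime_dvd_mult_iff[OF pr] by blast
  have "p dvd u*v" using \<open>p dvd u\<close> by simp
  hence "p dvd 2*a" using H1' by (metis dvd_diff_right_iff dvd_minus_iff minus_diff_eq)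
  hence "p dvd a" using n2 prime_dvd_mult_iff[OF pr] by blast
  thus False using nz \<open>p dvd u\<close> pv by auto
qed

lemma core1:
  fixes p a b c :: int
  assumes pr: "prime p" and od: "odd p"
    and H1: "p dvd b*c - 2*a" and H2: "p dvd a^2+b^2+c^2-a*b*c"
    and nz: "\<not>(p dvd a \<and> p dvd b \<and> p dvd c)"
  shows "\<not> p dvd b \<and> \<not> p dvd c"
proof -
  have E: "p dvd 4*b^2+4*c^2-b^2*c^2"
  proof -
    have "4*b^2+4*c^2-b^2*c^2 = 4*(a^2+b^2+c^2-a*b*c) - (b*c-2*a)*(b*c-2*a)"
      by (simp add: algebra_simps power2_eq_square)
    moreover have "p dvd 4*(a^2+b^2+c^2-a*b*c) - (b*c-2*a)*(b*c-2*a)"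
      by (rule dvd_diff[OF dvd_mult[OF H2] dvd_mult[OF H1]])
    ultimately show ?thesis by metis
  qed
  have "\<not> p dvd b" using core0[OF pr od E H1] nz by blast
  moreover have "\<not> p dvd c"
    using core0[OF pr od _ _, of c b a] E H1 nz by (auto simp: algebra_simps)
  ultimately show ?thesis by blast
qed

lemma core2:
  fixes p a b c t :: int
  assumes pr: "prime p" and od: "odd p"
    and H1: "p dvd b*c - 2*a" and H2: "p dvd a^2+b^2+c^2-a*b*c"
    and nz: "\<not>(p dvd a \<and> p dvd b \<and> p dvd c)"
    and T: "p dvd c*t - 2*b"
  shows "p dvd (b-t)*(b+t) - 4"
proof -
  have E: "p dvd 4*b^2+4*c^2-b^2*c^2"
  proof -
    have "4*b^2+4*c^2-b^2*c^2 = 4*(a^2+b^2+c^2-a*b*c) - (b*c-2*a)*(b*c-2*a)"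
      by (simp add: algebra_simps power2_eq_square)
    moreover have "p dvd 4*(a^2+b^2+c^2-a*b*c) - (b*c-2*a)*(b*c-2*a)"
      by (rule dvd_diff[OF dvd_mult[OF H2] dvd_mult[OF H1]])
    ultimately show ?thesis by metis
  qed
  have nc: "\<not> p dvd c" using core1[OF pr od H1 H2 nz] by blast
  have "(c*c)*((b-t)*(b+t) - 4) = -(4*b^2+4*c^2-b^2*c^2) - (c*t-2*b)*(c*t+2*b)"
    by (simp add: algebra_simps power2_eq_square)
  moreover have "p dvd -(4*b^2+4*c^2-b^2*c^2) - (c*t-2*b)*(c*t+2*b)"
    by (rule dvd_diff[OF dvd_minus_iff[THEN iffD2, OF E] dvd_mult2[OF T]])
  ultimately have "p dvd (c*c)*((b-t)*(b+t) - 4)" by metis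
  thus ?thesis using nc prime_dvd_mult_iff[OF pr] by blast
qed

lemma core_inj:
  fixes p a b c t a' b' c' t' :: int
  assumes pr: "prime p" and od: "odd p"
    and H1: "p dvd b*c - 2*a" and H2: "p dvd a^2+b^2+c^2-a*b*c"
    and nz: "\<not>(p dvd a \<and> p dvd b \<and> p dvd c)"
    and T: "p dvd c*t - 2*b"
    and H1': "p dvd b'*c' - 2*a'" and H2': "p dvd a'^2+b'^2+c'^2-a'*b'*c'"
    and nz': "\<not>(p dvd a' \<and> p dvd b' \<and> p dvd c')"
    and T': "p dvd c'*t' - 2*b'"
    and eq: "p dvd (b-t) - (b'-t')"
  shows "p dvd a - a' \<and> p dvd b - b' \<and> p dvd c - c'"
proof -
  have n2: "\<not> p dvd 2" and n4: "\<not> p dvd 4" using p_not_dvd_2 p_not_dvd_4 pr od by auto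
  have R: "p dvd (b-t)*(b+t) - 4" by (rule core2[OF pr od H1 H2 nz T])
  have R': "p dvd (b'-t')*(b'+t') - 4" by (rule core2[OF pr od H1' H2' nz' T'])
  have na: "\<not> p dvd (b-t)"
  proof
    assume "p dvd b - t"
    hence "p dvd (b-t)*(b+t)" by simp
    hence "p dvd 4" using R by (metis dvd_diff_right_iff dvd_minus_iff minus_diff_eq)
    thus False using n4 by simp
  qed
  have "(b-t)*((b+t)-(b'+t')) = ((b-t)*(b+t) - 4) - ((b'-t')*(b'+t') - 4) - ((b-t) - (b'-t'))*(b'+t')"
    by (simp add: algebra_simps)
  moreover have "p dvd ((b-t)*(b+t) - 4) - ((b'-t')*(b'+t') - 4) - ((b-t) - (b'-t'))*(b'+t')"
    by (rule dvd_diff[OF dvd_diff[OF R R'] dvd_mult2[OF eq]])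
  ultimately have "p dvd (b-t)*((b+t)-(b'+t'))" by metis
  hence S: "p dvd (b+t)-(b'+t')" using na prime_dvd_mult_iff[OF pr] by blast
  have "2*(b-b') = ((b+t)-(b'+t')) + ((b-t) - (b'-t'))" by (simp add: algebra_simps)
  hence "p dvd 2*(b-b')" using S eq by (metis dvd_add)
  hence B: "p dvd b - b'" using n2 prime_dvd_mult_iff[OF pr] by blast
  have "t - t' = (b-b') - ((b-t) - (b'-t'))" by (simp add: algebra_simps)
  hence TT: "p dvd t - t'" using B eq by (metis dvd_diff)
  have nt: "\<not> p dvd t"
  proof
    assume "p dvd t"
    hence "p dvd c*t" by simp
    hence "p dvd 2*b" using T by (metis dvd_diff_right_iff dvd_minus_iff minus_diff_eq)
    hence "p dvd b" using n2 prime_dvd_mult_iff[OF pr] by blast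
    thus False using core1[OF pr od H1 H2 nz] by blast
  qed
  have "t*(c-c') = (c*t-2*b) - (c'*t'-2*b') + 2*(b-b') - c'*(t-t')" by (simp add: algebra_simps)
  moreover have "p dvd (c*t-2*b) - (c'*t'-2*b') + 2*(b-b') - c'*(t-t')"
    by (rule dvd_diff[OF dvd_add[OF dvd_diff[OF T T'] dvd_mult[OF B]] dvd_mult[OF TT]])
  ultimately have "p dvd t*(c-c')" by metis
  hence C: "p dvd c - c'" using nt prime_dvd_mult_iff[OF pr] by blast
  have "2*(a-a') = (b'*c'-2*a') - (b*c-2*a) + (b-b')*c + b'*(c-c')" by (simp add: algebra_simps)
  moreover have "p dvd (b'*c'-2*a') - (b*c-2*a) + (b-b')*c + b'*(c-c')"
    by (rule dvd_add[OF dvd_add[OF dvd_diff[OF H1' H1] dvd_mult2[OF B]] dvd_mult[OF C]])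
  ultimately have "p dvd 2*(a-a')" by metis
  hence "p dvd a - a'" using n2 prime_dvd_mult_iff[OF pr] by blast
  thus ?thesis using B C by blast
qed



definition mk :: "int \<Rightarrow> int \<Rightarrow> int \<Rightarrow> int \<Rightarrow> bool" where
  "mk p x y z \<longleftrightarrow> x \<in> {0..<p} \<and> y \<in> {0..<p} \<and> z \<in> {0..<p}
      \<and> (x, y, z) \<noteq> (0, 0, 0) \<and> (x^2 + y^2 + z^2) mod p = (x * y * z) mod p"

lemma mem_M: "(x,y,z) \<in> markoff_set p \<longleftrightarrow> mk p x y z"
  by (simp add: markoff_set_def mk_def)

lemma mk_swap12: "mk p x y z \<Longrightarrow> mk p y x z"
  by (auto simp: mk_def ac_simps)
lemma mk_rot: "mk p x y z \<Longrightarrow> mk p z x y"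
  by (auto simp: mk_def ac_simps)

lemma dvd_mod_self: "(p::int) dvd (a mod p - a)"
  using mod_eq_dvd_iff[of "a mod p" p a] by simp

lemma range_dvd_eq: "x \<in> {0..<(p::int)} \<Longrightarrow> y \<in> {0..<p} \<Longrightarrow> p dvd x - y \<Longrightarrow> x = y"
  using mod_eq_dvd_iff[of x p y] by (simp add: mod_pos_pos_trivial)

lemma range_dvd_0: "x \<in> {0..<(p::int)} \<Longrightarrow> p dvd x \<Longrightarrow> x = 0"
  using range_dvd_eq[of x p 0] by simp

lemma mk_dvd: "mk p x y z \<Longrightarrow> p dvd x^2+y^2+z^2 - x*y*z"
  unfolding mk_def using mod_eq_dvd_iff by blast

lemma vieta:
  assumes pr: "prime p" and m: "mk p a b c"
  shows "mk p ((b*c-a) mod p) b c"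
proof -
  define a' where "a' = (b*c-a) mod p"
  have pp: "p > 0" using pr prime_gt_0_int by blast
  have d: "p dvd a' - (b*c - a)" unfolding a'_def by (rule dvd_mod_self)
  have "a'^2+b^2+c^2-a'*b*c = (a^2+b^2+c^2-a*b*c) + (a' - (b*c - a))*(a'-a)"
    by (simp add: algebra_simps power2_eq_square)
  moreover have "p dvd (a^2+b^2+c^2-a*b*c) + (a' - (b*c - a))*(a'-a)"
    by (rule dvd_add[OF mk_dvd[OF m] dvd_mult2[OF d]])
  ultimately have e: "p dvd a'^2+b^2+c^2-a'*b*c" by metis
  have r: "a' \<in> {0..<p}" unfolding a'_def using pp by simp
  have nz: "(a',b,c) \<noteq> (0,0,0)"
  proof
    assume h: "(a',b,c) = (0,0,0)"
    hence "p dvd a" using d by simp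
    hence "a = 0" using range_dvd_0 m unfolding mk_def by blast
    thus False using h m unfolding mk_def by simp
  qed
  have "(a'^2+b^2+c^2) mod p = (a'*b*c) mod p" using e mod_eq_dvd_iff by blast
  thus ?thesis using r nz m unfolding mk_def a'_def[symmetric] by blast
qed

lemma move_M:
  assumes pr: "prime p" and P: "P \<in> markoff_set p"
  shows "markoff_move p i P \<in> markoff_set p"
proof -
  obtain x y z where Pe: "P = (x,y,z)" by (cases P) auto
  have m: "mk p x y z" using P Pe mem_M by simp
  have 1: "mk p ((y*z-x) mod p) y z" by (rule vieta[OF pr m])
  have 2: "mk p x ((x*z-y) mod p) z" using vieta[OF pr mk_swap12[OF m]] by (rule mk_swap12)
  have 3: "mk p x y ((x*y-z) mod p)" using mk_rot[OF mk_rot[OF vieta[OF pr mk_rot[OF m]]]] .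
  show ?thesis using 1 2 3 m unfolding Pe markoff_move_def by (auto simp: mem_M)
qed

lemma move_inv:
  assumes pr: "prime p" and P: "P \<in> markoff_set p"
  shows "markoff_move p i (markoff_move p i P) = P"
proof -
  obtain x y z where Pe: "P = (x,y,z)" by (cases P) auto
  have m: "mk p x y z" using P Pe mem_M by simp
  hence r: "x mod p = x" "y mod p = y" "z mod p = z" unfolding mk_def by (auto simp: mod_pos_pos_trivial)
  show ?thesis unfolding Pe markoff_move_def using r by (auto simp: mod_diff_right_eq)
qed

lemma act_Cons: "markoff_act p (a # w) = markoff_move p a \<circ> markoff_act p w"
  by (simp add: markoff_act_def)

lemma act_single: "markoff_act p [a] = markoff_move p a"
  by (simp add: markoff_act_def)

lemma act_append: "markoff_act p (xs @ ys) = markoff_act p xs \<circ> markoff_act p ys"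
  by (induct xs) (auto simp: markoff_act_def)

lemma act_M: "prime p \<Longrightarrow> P \<in> markoff_set p \<Longrightarrow> markoff_act p w P \<in> markoff_set p"
  by (induct w) (auto simp: markoff_act_def move_M)

lemma act_rev_inv: "prime p \<Longrightarrow> P \<in> markoff_set p \<Longrightarrow> markoff_act p (rev u) (markoff_act p u P) = P"
proof (induct u arbitrary: P)
  case Nil thus ?case by (simp add: markoff_act_def)
next
  case (Cons a u)
  have "markoff_act p (rev (a#u)) (markoff_act p (a#u) P)
     = markoff_act p (rev u) (markoff_move p a (markoff_move p a (markoff_act p u P)))"
    by (simp add: act_append act_Cons act_single, simp add: markoff_act_def)
  also have "\<dots> = markoff_act p (rev u) (markoff_act p u P)"
    using move_inv[OF Cons.prems(1) act_M[OF Cons.prems]] by simp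
  also have "\<dots> = P" using Cons by simp
  finally show ?case .
qed



definition minv :: "int \<Rightarrow> int \<Rightarrow> int" where
  "minv p c = (SOME j. p dvd c*j - 1)"

lemma minv: assumes "prime p" "\<not> p dvd c" shows "p dvd c * minv p c - 1"
proof -
  have "coprime c p" using prime_imp_coprime[OF assms] by (simp add: coprime_commute)
  then obtain x where "[c*x = 1] (mod p)" using cong_solve_coprime_int by blast
  hence "\<exists>j. p dvd c*j - 1" using cong_iff_dvd_diff by blast
  thus ?thesis unfolding minv_def by (rule someI_ex)
qed

definition phi :: "int \<Rightarrow> int \<Rightarrow> int \<Rightarrow> int" where
  "phi p b c = (b - 2*b*minv p c) mod p"

definition good :: "int \<Rightarrow> int \<Rightarrow> int \<Rightarrow> int \<Rightarrow> bool" where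
  "good p a b c \<longleftrightarrow> mk p a b c \<and> (b*c - a) mod p = a"

lemma good_dvd:
  assumes "good p a b c"
  shows "p dvd b*c - 2*a" "p dvd a^2+b^2+c^2-a*b*c" "\<not>(p dvd a \<and> p dvd b \<and> p dvd c)"
proof -
  have m: "mk p a b c" and e: "(b*c - a) mod p = a" using assms good_def by auto
  have "a mod p = a" using m unfolding mk_def by (auto simp: mod_pos_pos_trivial)
  hence "(b*c - a) mod p = a mod p" using e by simp
  hence "p dvd (b*c - a) - a" using mod_eq_dvd_iff by blast
  moreover have "(b*c - a) - a = b*c - 2*a" by simp
  ultimately show "p dvd b*c - 2*a" by metis
  show "p dvd a^2+b^2+c^2-a*b*c" by (rule mk_dvd[OF m])
  show "\<not>(p dvd a \<and> p dvd b \<and> p dvd c)"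
    using m range_dvd_0 unfolding mk_def by blast
qed

lemma T_dvd: assumes "prime p" "\<not> p dvd c" shows "p dvd c*(2*b*minv p c) - 2*b"
proof -
  have "c*(2*b*minv p c) - 2*b = (2*b)*(c * minv p c - 1)" by (simp add: algebra_simps)
  thus ?thesis using minv[OF assms] by (metis dvd_mult)
qed

lemma phi_range:
  assumes pr: "prime p" and od: "odd p" and g: "good p a b c"
  shows "phi p b c \<in> {1..p-1}"
proof -
  note G = good_dvd[OF g]
  have nc: "\<not> p dvd c" using core1[OF pr od G] by blast
  have R: "p dvd (b - 2*b*minv p c)*(b + 2*b*minv p c) - 4"
    using core2[OF pr od G T_dvd[OF pr nc]] .
  have n4: "\<not> p dvd 4" using p_not_dvd_4[OF pr od] .
  have na: "\<not> p dvd (b - 2*b*minv p c)"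
  proof
    assume "p dvd b - 2*b*minv p c"
    hence "p dvd (b - 2*b*minv p c)*(b + 2*b*minv p c)" by simp
    hence "p dvd 4" using R by (metis dvd_diff_right_iff dvd_minus_iff minus_diff_eq)
    thus False using n4 by simp
  qed
  have pp: "p > 0" using pr prime_gt_0_int by blast
  have "phi p b c \<noteq> 0" using na unfolding phi_def by (simp add: dvd_eq_mod_eq_0)
  moreover have "phi p b c \<in> {0..<p}" unfolding phi_def using pp by simp
  ultimately show ?thesis by auto
qed

lemma phi_inj:
  assumes pr: "prime p" and od: "odd p" and g: "good p a b c" and g': "good p a' b' c'"
    and eq: "phi p b c = phi p b' c'"
  shows "(a,b,c) = (a',b',c')"
proof -
  note G = good_dvd[OF g] and G' = good_dvd[OF g']
  have nc: "\<not> p dvd c" using core1[OF pr od G] by blast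
  have nc': "\<not> p dvd c'" using core1[OF pr od G'] by blast
  have "p dvd (b - 2*b*minv p c) - (b' - 2*b'*minv p c')"
    using eq unfolding phi_def by (simp only: mod_eq_dvd_iff)
  from core_inj[OF pr od G T_dvd[OF pr nc] G' T_dvd[OF pr nc'] this]
  have D: "p dvd a - a'" "p dvd b - b'" "p dvd c - c'" by auto
  have m: "mk p a b c" "mk p a' b' c'" using g g' good_def by auto
  have r: "a \<in> {0..<p}" "b \<in> {0..<p}" "c \<in> {0..<p}" "a' \<in> {0..<p}" "b' \<in> {0..<p}" "c' \<in> {0..<p}"
    using m unfolding mk_def by auto
  have "a = a'" by (rule range_dvd_eq[OF r(1) r(4) D(1)])
  moreover have "b = b'" by (rule range_dvd_eq[OF r(2) r(5) D(2)])
  moreover have "c = c'" by (rule range_dvd_eq[OF r(3) r(6) D(3)])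
  ultimately show ?thesis by simp
qed

lemma count_good:
  assumes pr: "prime p" and od: "odd p"
    and S: "\<And>P. P \<in> S \<Longrightarrow> good p (A P) (B P) (C P)"
    and inj: "inj_on (\<lambda>P. (A P, B P, C P)) S"
  shows "card S \<le> nat (p - 1)"
proof -
  let ?f = "\<lambda>P. phi p (B P) (C P)"
  have "inj_on ?f S"
  proof (rule inj_onI)
    fix P Q assume "P \<in> S" "Q \<in> S" "?f P = ?f Q"
    hence "(A P, B P, C P) = (A Q, B Q, C Q)"
      by (intro phi_inj[OF pr od S[OF \<open>P \<in> S\<close>] S[OF \<open>Q \<in> S\<close>]])
    thus "P = Q" by (rule inj_onD[OF inj _ \<open>P \<in> S\<close> \<open>Q \<in> S\<close>])
  qed
  moreover have "?f ` S \<subseteq> {1..p-1}" by (rule image_subsetI, rule phi_range[OF pr od S])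
  ultimately have "card S \<le> card {1..p-1}" by (rule card_inj_on_le) simp
  thus ?thesis by simp
qed

definition fixi :: "int \<Rightarrow> nat \<Rightarrow> (int\<times>int\<times>int) set" where
  "fixi p i = {Q \<in> markoff_set p. markoff_move p i Q = Q}"

lemma fixi_mem:
  assumes "(x,y,z) \<in> fixi p i"
  shows "mk p x y z" "i = 1 \<Longrightarrow> (y*z-x) mod p = x" "i = 2 \<Longrightarrow> (x*z-y) mod p = y"
    "i = 3 \<Longrightarrow> (x*y-z) mod p = z"
  using assms by (auto simp: fixi_def mem_M markoff_move_def)

lemma card_fixi:
  assumes pr: "prime p" and od: "odd p" and i: "i \<in> {1,2,3}"
  shows "card (fixi p i) \<le> nat (p - 1)"
proof -
  consider "i = 1" | "i = 2" | "i = 3" using i by auto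
  thus ?thesis
  proof cases
    case 1
    show ?thesis
    proof (rule count_good[OF pr od, of _ fst "\<lambda>P. fst (snd P)" "\<lambda>P. snd (snd P)"])
      fix P assume P: "P \<in> fixi p i"
      obtain x y z where Pe: "P = (x,y,z)" by (cases P) auto
      have "good p x y z" using fixi_mem[OF P[unfolded Pe]] 1 by (simp add: good_def)
      thus "good p (fst P) (fst (snd P)) (snd (snd P))" using Pe by simp
    qed (auto simp: inj_on_def)
  next
    case 2
    show ?thesis
    proof (rule count_good[OF pr od, of _ "\<lambda>P. fst (snd P)" fst "\<lambda>P. snd (snd P)"])
      fix P assume P: "P \<in> fixi p i"
      obtain x y z where Pe: "P = (x,y,z)" by (cases P) auto
      have "good p y x z" using fixi_mem[OF P[unfolded Pe]] 2 mk_swap12 by (simp add: good_def)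
      thus "good p (fst (snd P)) (fst P) (snd (snd P))" using Pe by simp
    qed (auto simp: inj_on_def)
  next
    case 3
    show ?thesis
    proof (rule count_good[OF pr od, of _ "\<lambda>P. snd (snd P)" fst "\<lambda>P. fst (snd P)"])
      fix P assume P: "P \<in> fixi p i"
      obtain x y z where Pe: "P = (x,y,z)" by (cases P) auto
      have "good p z x y" using fixi_mem[OF P[unfolded Pe]] 3 mk_rot by (simp add: good_def)
      thus "good p (snd (snd P)) (fst P) (fst (snd P))" using Pe by simp
    qed (auto simp: inj_on_def)
  qed
qed



lemma push_rev_cancel: "foldr push_letter (rev u) (u @ r) = r"
  by (induct u) auto

lemma push_reduced: "successively (\<noteq>) (v @ w) \<Longrightarrow> foldr push_letter v w = v @ w"
proof (induct v)
  case Nil thus ?case by simp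
next
  case (Cons a v)
  have s: "successively (\<noteq>) (v @ w)" using Cons.prems by (cases "v @ w") auto
  show ?case
  proof (cases "v @ w")
    case Nil thus ?thesis using Cons s by simp
  next
    case (Cons b r)
    thus ?thesis using Cons.hyps[OF s] Cons.prems by simp
  qed
qed

lemma reduce_append: "reduce_word (xs @ ys) = foldr push_letter xs (reduce_word ys)"
  by (simp add: reduce_word_def)

lemma reduce_reduced: "successively (\<noteq>) w \<Longrightarrow> reduce_word w = w"
  unfolding reduce_word_def using push_reduced[of w "[]"] by simp

lemma decomp:
  "successively (\<noteq>) g \<Longrightarrow> g \<noteq> [] \<Longrightarrow>
   \<exists>u c. g = u @ c @ rev u \<and> c \<noteq> [] \<and> (length c = 1 \<or> hd c \<noteq> last c)"
proof (induct "length g" arbitrary: g rule: less_induct)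
  case less
  show ?case
  proof (cases "length g = 1 \<or> hd g \<noteq> last g")
    case True thus ?thesis using less.prems by (intro exI[of _ "[]"] exI[of _ g]) auto
  next
    case False
    have "length g \<noteq> 0" using less.prems(2) by simp
    moreover have "length g \<noteq> 1" using False by simp
    ultimately have l: "length g \<ge> 2" by linarith
    have hl: "hd g = last g" using False by simp
    obtain a r where ar: "g = a # r" using less.prems(2) by (cases g) auto
    have "r \<noteq> []" using ar l by auto
    hence "r = butlast r @ [last r]" by simp
    then obtain m b where ge: "g = a # m @ [b]" using ar by metis
    have ab: "a = b" using hl ge by simp
    have mne: "m \<noteq> []" using less.prems(1) ge ab by auto
    have sm: "successively (\<noteq>) m" using less.prems(1) ge
      successively_append_iff[of "(\<noteq>)" "[a]" "m @ [b]"] successively_append_iff[of "(\<noteq>)" m "[b]"]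
      by simp
    have "length m < length g" using ge by simp
    from less.hyps[OF this sm mne] obtain u c where
      "m = u @ c @ rev u" "c \<noteq> []" "length c = 1 \<or> hd c \<noteq> last c" by blast
    thus ?thesis using ge ab by (intro exI[of _ "a # u"] exI[of _ c]) auto
  qed
qed

lemma pow_Suc: "g [^]\<^bsub>markoff_group\<^esub> Suc k = reduce_word (g [^]\<^bsub>markoff_group\<^esub> k @ g)"
  by (simp add: nat_pow_def markoff_group_def)

lemma pow_0: "g [^]\<^bsub>markoff_group\<^esub> (0::nat) = []"
  by (simp add: markoff_group_def)

lemma concat_rep:
  assumes "successively (\<noteq>) c" "c \<noteq> []" "hd c \<noteq> last c"
  shows "successively (\<noteq>) (concat (replicate (Suc k) c)) \<and> concat (replicate (Suc k) c) \<noteq> []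
    \<and> hd (concat (replicate (Suc k) c)) = hd c \<and> last (concat (replicate (Suc k) c)) = last c"
proof (induct k)
  case 0 thus ?case using assms by simp
next
  case (Suc k)
  have e: "concat (replicate (Suc (Suc k)) c) = c @ concat (replicate (Suc k) c)" by simp
  show ?case unfolding e using Suc assms
    by (auto simp: successively_append_iff hd_append last_append)
qed

lemma swap_mid:
  assumes "successively P (xs @ ys @ zs)" "successively P ys'" "ys \<noteq> []" "ys' \<noteq> []"
    "hd ys' = hd ys" "last ys' = last ys"
  shows "successively P (xs @ ys' @ zs)"
proof -
  have a: "successively P xs" "successively P zs" "xs = [] \<or> P (last xs) (hd ys)"
    "zs = [] \<or> P (last ys) (hd zs)"
    using assms(1,3) by (auto simp: successively_append_iff)
  have "successively P (ys' @ zs)" using a assms(2,4,6) by (simp add: successively_append_iff)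
  moreover have "hd (ys' @ zs) = hd ys" using assms(4,5) by simp
  ultimately show ?thesis using a assms(4) by (simp add: successively_append_iff)
qed

lemma pow_formula:
  assumes g: "g = u @ c @ rev u" and sg: "successively (\<noteq>) g" and cne: "c \<noteq> []"
    and hc: "hd c \<noteq> last c"
  shows "g [^]\<^bsub>markoff_group\<^esub> Suc k = u @ concat (replicate (Suc k) c) @ rev u"
proof (induct k)
  case 0 show ?case unfolding pow_Suc pow_0 using reduce_reduced[OF sg] g by simp
next
  case (Suc k)
  define X where "X = concat (replicate (Suc k) c)"
  have sc: "successively (\<noteq>) c" using sg g by (simp add: successively_append_iff)
  have XX: "X @ c = concat (replicate (Suc (Suc k)) c)"
  proof -
    have "replicate (Suc (Suc k)) c = replicate (Suc k) c @ [c]"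
      by (metis replicate_Suc replicate_append_same)
    thus ?thesis unfolding X_def by (simp only: concat_append concat.simps append_Nil2)
  qed
  have cr: "successively (\<noteq>) (concat (replicate (Suc (Suc k)) c))"
    "concat (replicate (Suc (Suc k)) c) \<noteq> []"
    "hd (concat (replicate (Suc (Suc k)) c)) = hd c"
    "last (concat (replicate (Suc (Suc k)) c)) = last c"
    using concat_rep[OF sc cne hc, of "Suc k"] by auto
  have sw: "successively (\<noteq>) (u @ concat (replicate (Suc (Suc k)) c) @ rev u)"
    using swap_mid[OF sg[unfolded g] cr(1) cne cr(2) cr(3) cr(4)] .
  have "g [^]\<^bsub>markoff_group\<^esub> Suc (Suc k) = reduce_word ((u @ X @ rev u) @ g)"
  proof -
    have IH: "g [^]\<^bsub>markoff_group\<^esub> Suc k = u @ X @ rev u" using Suc X_def by simp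
    show ?thesis unfolding pow_Suc[of g "Suc k"] IH by simp
  qed
  also have "\<dots> = foldr push_letter (u @ X) (foldr push_letter (rev u) (u @ (c @ rev u)))"
    using reduce_reduced[OF sg] g by (simp add: reduce_append)
  also have "\<dots> = foldr push_letter (u @ X) (c @ rev u)" by (simp add: push_rev_cancel)
  also have "\<dots> = u @ X @ c @ rev u"
  proof -
    have "successively (\<noteq>) ((u @ X) @ (c @ rev u))" using sw unfolding XX[symmetric] by simp
    from push_reduced[OF this] show ?thesis by simp
  qed
  finally show ?case using XX by simp
qed



lemma finite_M: "finite (markoff_set p)"
proof -
  have "markoff_set p \<subseteq> {0..<p} \<times> {0..<p} \<times> {0..<p}" by (auto simp: markoff_set_def)
  thus ?thesis by (rule finite_subset) auto
qed

theorem lemma6p4: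
  fixes p :: int and g :: "nat list"
  assumes "prime p" and "odd p"
    and "g \<in> carrier markoff_group"
    and "g \<noteq> \<one>\<^bsub>markoff_group\<^esub>"
    and "\<exists>n::nat. n > 0 \<and> g [^]\<^bsub>markoff_group\<^esub> n = \<one>\<^bsub>markoff_group\<^esub>"
  shows "int (card {P \<in> markoff_set p. markoff_act p g P = P}) < p"
proof -
  note pr = assms(1) and od = assms(2)
  obtain n :: nat where n: "n > 0" "g [^]\<^bsub>markoff_group\<^esub> n = []"
    using assms(5) by (auto simp: markoff_group_def)
  have sg: "successively (\<noteq>) g" and setg: "set g \<subseteq> {1,2,3}"
    using assms(3) by (auto simp: markoff_group_def reduced_word_def)
  have gne: "g \<noteq> []" using assms(4) by (simp add: markoff_group_def)
  obtain u c where g: "g = u @ c @ rev u" and cne: "c \<noteq> []" and lc: "length c = 1 \<or> hd c \<noteq> last c"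
    using decomp[OF sg gne] by blast
  have "length c = 1"
  proof (rule ccontr)
    assume "length c \<noteq> 1"
    hence hc: "hd c \<noteq> last c" using lc by simp
    have sc: "successively (\<noteq>) c" using sg g by (simp add: successively_append_iff)
    have ns: "n = Suc (n - 1)" using n by simp
    have "g [^]\<^bsub>markoff_group\<^esub> Suc (n - 1) = u @ concat (replicate (Suc (n-1)) c) @ rev u"
      by (rule pow_formula[OF g sg cne hc])
    moreover have "concat (replicate (Suc (n-1)) c) \<noteq> []" using concat_rep[OF sc cne hc] by blast
    ultimately show False using n ns by simp
  qed
  then obtain i where ci: "c = [i]" by (cases c) auto
  have i: "i \<in> {1,2,3}" using setg g ci by auto
  let ?F = "{P \<in> markoff_set p. markoff_act p g P = P}"
  let ?h = "markoff_act p (rev u)"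
  have actg: "markoff_act p g = markoff_act p u \<circ> markoff_move p i \<circ> ?h"
    unfolding g ci by (simp add: act_append act_Cons comp_assoc)
  have bk: "markoff_act p u (?h P) = P" if "P \<in> markoff_set p" for P
    using act_rev_inv[OF pr that, of "rev u"] by simp
  have "inj_on ?h ?F"
  proof (rule inj_onI)
    fix P Q assume "P \<in> ?F" "Q \<in> ?F" "?h P = ?h Q"
    thus "P = Q" using bk by (metis (no_types, lifting) mem_Collect_eq)
  qed
  moreover have "?h ` ?F \<subseteq> fixi p i"
  proof (rule image_subsetI)
    fix P assume P: "P \<in> ?F"
    hence PM: "P \<in> markoff_set p" and fx: "markoff_act p g P = P" by auto
    define Q where "Q = ?h P"
    have QM: "Q \<in> markoff_set p" unfolding Q_def by (rule act_M[OF pr PM])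
    have MQ: "markoff_move p i Q \<in> markoff_set p" by (rule move_M[OF pr QM])
    have "markoff_act p u (markoff_move p i Q) = P" using fx actg unfolding Q_def by simp
    hence "?h (markoff_act p u (markoff_move p i Q)) = Q" unfolding Q_def by simp
    hence "markoff_move p i Q = Q" using act_rev_inv[OF pr MQ] by simp
    thus "?h P \<in> fixi p i" using QM unfolding Q_def fixi_def by simp
  qed
  moreover have "finite (fixi p i)"
    using finite_M[of p] unfolding fixi_def by simp
  ultimately have "card ?F \<le> card (fixi p i)" by (rule card_inj_on_le)
  also have "\<dots> \<le> nat (p - 1)" by (rule card_fixi[OF pr od i])
  finally have "int (card ?F) \<le> p - 1" using prime_gt_0_int[OF pr] by linarith
  thus ?thesis by simp
qed


end
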